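(* Let $G$ be a finite directed acyclic graph whose input nodes (the nodes with no incoming edge) are the $d$ coordinates of a vector $\bm x$, and let $o$ be a leaf node of $G$. For an input node $x$, let $\mathcal P(x,o)$ be the set of directed paths from $x$ to $o$; for a path ${\bm p}$ let $\tilde{\bm p}$ be the path without its starting node, and $d_p$ the in-degree of node $p$. Assume the symmetry assumption (S): all input nodes $x$ have the same multiset $\{d_{\bm p}\}_{{\bm p}\in\mathcal P(x,o)}$ of path-degrees, where the path-degree $d_{\bm p}$ of ${\bm p}$ is the multiset $\{d_p: p\in\tilde{\bm p}\}$. Then for every input node $x$, $$\sum_{{\bm p}\in\mathcal P(x,o)}\prod_{p\in\tilde{\bm p}}\frac1{d_p}=\frac1d.$$ *)

theory Defs
  imports Complex_Main "HOL-Library.Multiset"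
begin

definition in_degree :: "('a \<times> 'a) set \<Rightarrow> 'a \<Rightarrow> nat" where
  "in_degree E v = card {u. (u, v) \<in> E}"

definition input_nodes :: "'a set \<Rightarrow> ('a \<times> 'a) set \<Rightarrow> 'a set" where
  "input_nodes V E = {v \<in> V. \<forall>u. (u, v) \<notin> E}"

definition is_leaf :: "'a set \<Rightarrow> ('a \<times> 'a) set \<Rightarrow> 'a \<Rightarrow> bool" where
  "is_leaf V E v \<longleftrightarrow> v \<in> V \<and> (\<forall>w. (v, w) \<notin> E)"

definition dpaths :: "('a \<times> 'a) set \<Rightarrow> 'a \<Rightarrow> 'a \<Rightarrow> 'a list set" where
  "dpaths E x t = {ps. ps \<noteq> [] \<and> hd ps = x \<and> last ps = t \<and> successively (\<lambda>u v. (u, v) \<in> E) ps}"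

definition path_degree :: "('a \<times> 'a) set \<Rightarrow> 'a list \<Rightarrow> nat multiset" where
  "path_degree E ps = mset (map (in_degree E) (tl ps))"

definition path_degrees :: "('a \<times> 'a) set \<Rightarrow> 'a \<Rightarrow> 'a \<Rightarrow> nat multiset multiset" where
  "path_degrees E x t = image_mset (path_degree E) (mset_set (dpaths E x t))"

end

theory Submission
  imports Defs
begin

definition pw :: "('a \<times> 'a) set \<Rightarrow> 'a list \<Rightarrow> real" where
  "pw E ps = (\<Prod>p \<leftarrow> tl ps. 1 / real (in_degree E p))"

lemma succ_trancl:
  "successively (\<lambda>u v. (u, v) \<in> E) (a # ps) \<Longrightarrow> v \<in> set ps \<Longrightarrow> (a, v) \<in> E\<^sup>+"
proof (induction ps arbitrary: a)
  case Nil then show ?case by simp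
next
  case (Cons b ps)
  then have ab: "(a, b) \<in> E" and s: "successively (\<lambda>u v. (u, v) \<in> E) (b # ps)" by auto
  show ?case
  proof (cases "v = b")
    case True then show ?thesis using ab by auto
  next
    case False
    then have "v \<in> set ps" using Cons.prems by auto
    then have "(b, v) \<in> E\<^sup>+" using Cons.IH s by blast
    then show ?thesis using ab by (meson trancl_into_trancl2)
  qed
qed

lemma succ_distinct:
  "acyclic E \<Longrightarrow> successively (\<lambda>u v. (u, v) \<in> E) ps \<Longrightarrow> distinct ps"
proof (induction ps)
  case Nil then show ?case by simp
next
  case (Cons a ps)
  have "a \<notin> set ps"
  proof
    assume "a \<in> set ps"
    then have "(a, a) \<in> E\<^sup>+" using succ_trancl Cons.prems(2) by metis
    then show False using Cons.prems(1) by (simp add: acyclic_def)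
  qed
  moreover have "successively (\<lambda>u v. (u, v) \<in> E) ps"
    using Cons.prems(2) by (auto simp: successively_Cons)
  ultimately show ?case using Cons by simp
qed

lemma succ_inV:
  assumes "E \<subseteq> V \<times> V" "successively (\<lambda>u v. (u, v) \<in> E) (a # ps)"
  shows "set ps \<subseteq> V"
proof
  fix v assume "v \<in> set ps"
  then have "(a, v) \<in> E\<^sup>+" using succ_trancl assms(2) by metis
  then obtain u where "(u, v) \<in> E" by (meson tranclE)
  then show "v \<in> V" using assms(1) by auto
qed

lemma dpaths_finite:
  assumes "finite V" "E \<subseteq> V \<times> V" "acyclic E"
  shows "finite (dpaths E x t)"
proof -
  have "dpaths E x t \<subseteq> {xs. set xs \<subseteq> insert x V \<and> length xs \<le> card (insert x V)}"
  proof
    fix ps assume "ps \<in> dpaths E x t"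
    then have ne: "ps \<noteq> []" and h: "hd ps = x" and s: "successively (\<lambda>u v. (u, v) \<in> E) ps"
      by (auto simp: dpaths_def)
    then obtain rest where ps: "ps = x # rest" by (cases ps) auto
    have sub: "set ps \<subseteq> insert x V" using succ_inV[OF assms(2)] s ps by auto
    have "distinct ps" using succ_distinct assms(3) s by blast
    then have "length ps = card (set ps)" by (simp add: distinct_card)
    also have "\<dots> \<le> card (insert x V)" using sub assms(1) by (simp add: card_mono)
    finally show "ps \<in> {xs. set xs \<subseteq> insert x V \<and> length xs \<le> card (insert x V)}"
      using sub by simp
  qed
  moreover have "finite {xs. set xs \<subseteq> insert x V \<and> length xs \<le> card (insert x V)}"
    using assms(1) by (simp add: finite_lists_length_le)
  ultimately show ?thesis by (rule finite_subset)
qed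

lemma dpaths_self:
  assumes "acyclic E"
  shows "dpaths E v v = {[v]}"
proof
  show "dpaths E v v \<subseteq> {[v]}"
  proof
    fix ps assume "ps \<in> dpaths E v v"
    then have ne: "ps \<noteq> []" and h: "hd ps = v" and l: "last ps = v"
      and s: "successively (\<lambda>u v. (u, v) \<in> E) ps"
      by (auto simp: dpaths_def)
    then obtain rest where ps: "ps = v # rest" by (cases ps) auto
    have "rest = []"
    proof (rule ccontr)
      assume "rest \<noteq> []"
      then have "v \<in> set rest" using l ps by (metis last_ConsR last_in_set)
      then have "(v, v) \<in> E\<^sup>+" using succ_trancl s ps by metis
      then show False using assms by (simp add: acyclic_def)
    qed
    then show "ps \<in> {[v]}" using ps by simp
  qed
qed (simp add: dpaths_def)

lemma dpaths_step:
  assumes "y \<noteq> v"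
  shows "dpaths E y v = (\<lambda>ps. ps @ [v]) ` (\<Union>u\<in>{u. (u, v) \<in> E}. dpaths E y u)"
proof
  show "dpaths E y v \<subseteq> (\<lambda>ps. ps @ [v]) ` (\<Union>u\<in>{u. (u, v) \<in> E}. dpaths E y u)"
  proof
    fix ps assume "ps \<in> dpaths E y v"
    then have ne: "ps \<noteq> []" and h: "hd ps = y" and l: "last ps = v"
      and s: "successively (\<lambda>u v. (u, v) \<in> E) ps"
      by (auto simp: dpaths_def)
    obtain qs where ps: "ps = qs @ [v]" using ne l by (metis append_butlast_last_id)
    have qne: "qs \<noteq> []" using ps h assms by auto
    have hq: "hd qs = y" using h ps qne by simp
    have sq: "successively (\<lambda>u v. (u, v) \<in> E) qs" and e: "(last qs, v) \<in> E"
      using s ps qne by (auto simp: successively_append_iff)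
    have "qs \<in> dpaths E y (last qs)" using qne hq sq by (simp add: dpaths_def)
    then show "ps \<in> (\<lambda>ps. ps @ [v]) ` (\<Union>u\<in>{u. (u, v) \<in> E}. dpaths E y u)"
      using ps e by blast
  qed
next
  show "(\<lambda>ps. ps @ [v]) ` (\<Union>u\<in>{u. (u, v) \<in> E}. dpaths E y u) \<subseteq> dpaths E y v"
    by (auto simp: dpaths_def successively_append_iff)
qed

lemma pw_snoc: "ps \<noteq> [] \<Longrightarrow> pw E (ps @ [v]) = pw E ps * (1 / real (in_degree E v))"
  by (cases ps) (auto simp: pw_def)

lemma W_step:
  assumes "finite V" "E \<subseteq> V \<times> V" "acyclic E" "y \<noteq> v"
  shows "(\<Sum>ps \<in> dpaths E y v. pw E ps) =
         (\<Sum>u\<in>{u. (u, v) \<in> E}. (\<Sum>ps \<in> dpaths E y u. pw E ps)) * (1 / real (in_degree E v))"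
proof -
  let ?P = "{u. (u, v) \<in> E}"
  have finP: "finite ?P" using assms(1,2) by (metis (no_types, lifting) SigmaD1 finite_subset mem_Collect_eq subset_iff)
  have inj: "inj_on (\<lambda>ps. ps @ [v]) (\<Union>u\<in>?P. dpaths E y u)" by (auto intro: inj_onI)
  have "(\<Sum>ps \<in> dpaths E y v. pw E ps) = (\<Sum>ps \<in> (\<Union>u\<in>?P. dpaths E y u). pw E (ps @ [v]))"
    unfolding dpaths_step[OF assms(4)] by (rule sum.reindex[OF inj, unfolded comp_def])
  also have "\<dots> = (\<Sum>u\<in>?P. \<Sum>ps \<in> dpaths E y u. pw E (ps @ [v]))"
    by (rule sum.UNION_disjoint[OF finP]) (simp add: dpaths_finite[OF assms(1-3)], fastforce simp: dpaths_def)
  also have "\<dots> = (\<Sum>u\<in>?P. \<Sum>ps \<in> dpaths E y u. pw E ps * (1 / real (in_degree E v)))"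
    by (intro sum.cong refl) (auto simp: pw_snoc dpaths_def)
  also have "\<dots> = (\<Sum>u\<in>?P. (\<Sum>ps \<in> dpaths E y u. pw E ps)) * (1 / real (in_degree E v))"
    by (simp add: sum_divide_distrib)
  finally show ?thesis .
qed

lemma g_one:
  assumes "finite V" "E \<subseteq> V \<times> V" "acyclic E"
  shows "v \<in> V \<Longrightarrow> (\<Sum>y\<in>input_nodes V E. \<Sum>ps \<in> dpaths E y v. pw E ps) = 1"
proof -
  have finE: "finite E" using assms(1,2) by (meson finite_SigmaI finite_subset)
  have wf: "wf E" using finite_acyclic_wf[OF finE assms(3)] .
  show "v \<in> V \<Longrightarrow> (\<Sum>y\<in>input_nodes V E. \<Sum>ps \<in> dpaths E y v. pw E ps) = 1"
  proof (induction v rule: wf_induct[OF wf])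
    case (1 v)
    let ?I = "input_nodes V E"
    let ?P = "{u. (u, v) \<in> E}"
    have finP: "finite ?P" using assms(1,2) by (metis (no_types, lifting) SigmaD1 finite_subset mem_Collect_eq subset_iff)
    have finI: "finite ?I" using assms(1) by (simp add: input_nodes_def)
    show ?case
    proof (cases "v \<in> ?I")
      case True
      have "(\<Sum>ps \<in> dpaths E y v. pw E ps) = (if y = v then 1 else 0)" for y
      proof (cases "y = v")
        case True then show ?thesis using dpaths_self[OF assms(3)] by (simp add: pw_def)
      next
        case False
        have "?P = {}" using \<open>v \<in> ?I\<close> by (auto simp: input_nodes_def)
        then show ?thesis using dpaths_step[OF False, of E] False by simp
      qed
      then show ?thesis using True finI by simp
    next
      case False
      then obtain u0 where "(u0, v) \<in> E" using 1(2) by (auto simp: input_nodes_def)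
      then have Pne: "?P \<noteq> {}" by auto
      have deg: "in_degree E v = card ?P" by (simp add: in_degree_def)
      have cpos: "card ?P > 0" using finP Pne by (simp add: card_gt_0_iff)
      have "(\<Sum>y\<in>?I. \<Sum>ps \<in> dpaths E y v. pw E ps)
          = (\<Sum>y\<in>?I. (\<Sum>u\<in>?P. (\<Sum>ps \<in> dpaths E y u. pw E ps)) * (1 / real (in_degree E v)))"
      proof (intro sum.cong refl)
        fix y assume "y \<in> ?I"
        then have "y \<noteq> v" using False by auto
        then show "(\<Sum>ps \<in> dpaths E y v. pw E ps) =
           (\<Sum>u\<in>?P. (\<Sum>ps \<in> dpaths E y u. pw E ps)) * (1 / real (in_degree E v))"
          by (rule W_step[OF assms])
      qed
      also have "\<dots> = (\<Sum>u\<in>?P. (\<Sum>y\<in>?I. \<Sum>ps \<in> dpaths E y u. pw E ps)) * (1 / real (in_degree E v))"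
        by (simp add: sum_distrib_right[symmetric] sum_divide_distrib[symmetric] sum.swap[of _ ?I])
      also have "\<dots> = (\<Sum>u\<in>?P. 1) * (1 / real (in_degree E v))"
      proof -
        have "(\<Sum>y\<in>?I. \<Sum>ps \<in> dpaths E y u. pw E ps) = 1" if "u \<in> ?P" for u
          using 1(1) that assms(2) by auto
        then show ?thesis by simp
      qed
      also have "\<dots> = 1" using deg cpos by simp
      finally show ?thesis .
    qed
  qed
qed

lemma pw_pd: "pw E ps = (\<Prod>k \<in># path_degree E ps. 1 / real k)"
  unfolding pw_def path_degree_def
  by (simp add: prod_mset_prod_list[symmetric] mset_map multiset.map_comp comp_def)

theorem lemma3:
  fixes V :: "'a set" and E :: "('a \<times> 'a) set" and t x :: 'a and d :: nat
  assumes "finite V"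
    and "E \<subseteq> V \<times> V"
    and "acyclic E"
    and "d = card (input_nodes V E)"
    and "is_leaf V E t"
    and sym: "\<forall>y \<in> input_nodes V E. \<forall>z \<in> input_nodes V E. path_degrees E y t = path_degrees E z t"
    and "x \<in> input_nodes V E"
  shows "(\<Sum>ps \<in> dpaths E x t. \<Prod>p \<leftarrow> tl ps. 1 / real (in_degree E p)) = 1 / real d"
proof -
  let ?I = "input_nodes V E"
  define S where "S y = (\<Sum>ps \<in> dpaths E y t. pw E ps)" for y
  have Sm: "S y = (\<Sum>M \<in># path_degrees E y t. \<Prod>k \<in># M. 1 / real k)" for y
    unfolding S_def path_degrees_def
    by (simp add: sum_unfold_sum_mset pw_pd multiset.map_comp comp_def)
  have Seq: "S y = S x" if "y \<in> ?I" for y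
    using sym that assms(7) Sm by metis
  have tV: "t \<in> V" using assms(5) by (simp add: is_leaf_def)
  have "1 = (\<Sum>y\<in>?I. S y)" using g_one[OF assms(1-3) tV] by (simp add: S_def)
  also have "\<dots> = (\<Sum>y\<in>?I. S x)" using Seq by simp
  also have "\<dots> = real d * S x" using assms(4) by simp
  finally have "real d * S x = 1" by simp
  then have "S x = 1 / real d" by (metis mult.commute nonzero_eq_divide_eq mult_zero_left zero_neq_one)
  then show ?thesis by (simp add: S_def pw_def)
qed

end
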